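(* Let $m\geq 3$, let $f$ be a positive smooth function of one real variable, and consider the Egorov space $(\mathbb{R}^m,g_f)$ with $g_f=f(x^m)\sum_{i=1}^{m-2}(dx^i)^2+2dx^{m-1}dx^m$. Let $\widehat{f}$ be a positive smooth function of one real variable and $\widehat{g}_{\widehat{f}}=\widehat{f}(x^m)\sum_{i=1}^{m-2}(dx^i)^2+2dx^{m-1}dx^m$. Then $\widehat{g}_{\widehat{f}}$ is harmonic with respect to $g_f$ if and only if $\widehat{f}'=f'$.
   Context: A pseudo-Riemannian metric $\widehat{h}$ on a manifold $N$ is harmonic with respect to a pseudo-Riemannian metric $h$ if the identity map $I:(N,h)\to(N,\widehat{h})$ is a harmonic map; in local coordinates, $h^{ij}(\widehat{\Gamma}^k_{ij}-\Gamma^k_{ij})=0$ for all $k$, where $\Gamma,\widehat{\Gamma}$ are the Christoffel symbols of $h,\widehat{h}$. *)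

theory Defs
  imports "HOL-Analysis.Analysis"
begin

text \<open>Points of R^m: coordinate functions p with coordinates p 1, ..., p m
  (all other entries zero). A (pseudo-Riemannian) metric in global coordinates is
  a function G giving the components G p i j at the point p, for i j in {1..m}.\<close>

definition coords :: "nat \<Rightarrow> (nat \<Rightarrow> real) set" where
  "coords m = {p. \<forall>i. i \<notin> {1..m} \<longrightarrow> p i = 0}"

definition smooth_fun :: "(real \<Rightarrow> real) \<Rightarrow> bool" where
  "smooth_fun f \<longleftrightarrow> (\<forall>n x. ((deriv ^^ n) f) differentiable (at x))"

definition partial :: "nat \<Rightarrow> ((nat \<Rightarrow> real) \<Rightarrow> real) \<Rightarrow> (nat \<Rightarrow> real) \<Rightarrow> real" where
  "partial l F p = deriv (\<lambda>t. F (p(l := p l + t))) 0"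

definition metric_inv ::
  "nat \<Rightarrow> ((nat \<Rightarrow> real) \<Rightarrow> nat \<Rightarrow> nat \<Rightarrow> real) \<Rightarrow> (nat \<Rightarrow> real) \<Rightarrow> nat \<Rightarrow> nat \<Rightarrow> real" where
  "metric_inv m G p = (THE H.
      (\<forall>i\<in>{1..m}. \<forall>k\<in>{1..m}. (\<Sum>j=1..m. H i j * G p j k) = (if i = k then 1 else 0)) \<and>
      (\<forall>i j. i \<notin> {1..m} \<or> j \<notin> {1..m} \<longrightarrow> H i j = 0))"

definition christoffel ::
  "nat \<Rightarrow> ((nat \<Rightarrow> real) \<Rightarrow> nat \<Rightarrow> nat \<Rightarrow> real) \<Rightarrow> nat \<Rightarrow> nat \<Rightarrow> nat \<Rightarrow> (nat \<Rightarrow> real) \<Rightarrow> real" where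
  "christoffel m G k i j p =
     (1/2) * (\<Sum>l=1..m. metric_inv m G p k l *
        (partial i (\<lambda>q. G q j l) p + partial j (\<lambda>q. G q i l) p - partial l (\<lambda>q. G q i j) p))"

definition harmonic_metric ::
  "nat \<Rightarrow> ((nat \<Rightarrow> real) \<Rightarrow> nat \<Rightarrow> nat \<Rightarrow> real) \<Rightarrow> ((nat \<Rightarrow> real) \<Rightarrow> nat \<Rightarrow> nat \<Rightarrow> real) \<Rightarrow> bool" where
  "harmonic_metric m G Ghat \<longleftrightarrow>
     (\<forall>p\<in>coords m. \<forall>k\<in>{1..m}.
        (\<Sum>i=1..m. \<Sum>j=1..m. metric_inv m G p i j *
            (christoffel m Ghat k i j p - christoffel m G k i j p)) = 0)"

definition egorov :: "nat \<Rightarrow> (real \<Rightarrow> real) \<Rightarrow> (nat \<Rightarrow> real) \<Rightarrow> nat \<Rightarrow> nat \<Rightarrow> real" where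
  "egorov m f p i j =
     (if i \<in> {1..m-2} \<and> j = i then f (p m)
      else if (i = m - 1 \<and> j = m) \<or> (i = m \<and> j = m - 1) then 1
      else 0)"

end

theory Submission
  imports Defs
begin

definition sg :: "nat \<Rightarrow> nat \<Rightarrow> nat" where
  "sg m k = (if k = m then m - 1 else if k = m - 1 then m else k)"

definition cg :: "nat \<Rightarrow> (real \<Rightarrow> real) \<Rightarrow> (nat \<Rightarrow> real) \<Rightarrow> nat \<Rightarrow> real" where
  "cg m g p i = (if i \<le> m - 2 then g (p m) else 1)"

lemma idx_cases: "i \<in> {1..m} \<Longrightarrow> (m::nat) \<ge> 3 \<Longrightarrow> (i \<in> {1..m-2}) \<or> i = m - 1 \<or> i = m"
  by auto

lemma sg_range: "m \<ge> 3 \<Longrightarrow> i \<in> {1..m} \<Longrightarrow> sg m i \<in> {1..m}"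
  unfolding sg_def by auto

lemma egorov_eq:
  assumes "m \<ge> 3"
  shows "egorov m g p i j = (if i \<in> {1..m} \<and> j = sg m i then cg m g p i else 0)"
  using assms unfolding egorov_def sg_def cg_def by auto

lemma egorov_sym: "egorov m g p i j = egorov m g p j i"
  unfolding egorov_def by auto

lemma sum_right:
  assumes "m \<ge> 3" "i \<in> {1..m}"
  shows "(\<Sum>j=1..m. egorov m g p i j * H j) = cg m g p i * H (sg m i)"
proof -
  have "(\<Sum>j=1..m. egorov m g p i j * H j) = (\<Sum>j=1..m. if j = sg m i then cg m g p i * H j else 0)"
    using assms by (intro sum.cong) (auto simp: egorov_eq)
  also have "\<dots> = cg m g p i * H (sg m i)"
    using sg_range[OF assms] by (simp add: sum.delta')
  finally show ?thesis .
qed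

lemma sum_left:
  assumes "m \<ge> 3" "i \<in> {1..m}"
  shows "(\<Sum>j=1..m. H j * egorov m g p j i) = H (sg m i) * cg m g p i"
  using sum_right[OF assms, of g p H] by (simp add: egorov_sym mult.commute)

lemma metric_inv_egorov:
  assumes m: "m \<ge> 3" and pos: "g (p m) \<noteq> 0"
  shows "metric_inv m (egorov m g) p = egorov m (\<lambda>_. 1 / g (p m)) p"
  unfolding metric_inv_def
proof (rule the_equality)
  let ?E = "egorov m (\<lambda>_. 1 / g (p m)) p"
  show "(\<forall>i\<in>{1..m}. \<forall>k\<in>{1..m}. (\<Sum>j=1..m. ?E i j * egorov m g p j k) = (if i = k then 1 else 0)) \<and>
      (\<forall>i j. i \<notin> {1..m} \<or> j \<notin> {1..m} \<longrightarrow> ?E i j = 0)"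
  proof (intro conjI ballI allI impI)
    fix i k assume i: "i \<in> {1..m}" and k: "k \<in> {1..m}"
    have "(\<Sum>j=1..m. ?E i j * egorov m g p j k) = ?E i (sg m k) * cg m g p k"
      by (rule sum_left[OF m k])
    also have "\<dots> = (if i = k then 1 else 0)"
      using idx_cases[OF i m] idx_cases[OF k m] m pos
      by (auto simp: egorov_eq sg_def cg_def)
    finally show "(\<Sum>j=1..m. ?E i j * egorov m g p j k) = (if i = k then 1 else 0)" .
  next
    fix i j assume "i \<notin> {1..m} \<or> j \<notin> {1..m}"
    then show "?E i j = 0" using m by (auto simp: egorov_def)
  qed
next
  fix H
  assume H: "(\<forall>i\<in>{1..m}. \<forall>k\<in>{1..m}. (\<Sum>j=1..m. H i j * egorov m g p j k) = (if i = k then 1 else 0)) \<and>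
      (\<forall>i j. i \<notin> {1..m} \<or> j \<notin> {1..m} \<longrightarrow> H i j = 0)"
  show "H = egorov m (\<lambda>_. 1 / g (p m)) p"
  proof (intro ext)
    fix i j
    show "H i j = egorov m (\<lambda>_. 1 / g (p m)) p i j"
    proof (cases "i \<in> {1..m} \<and> j \<in> {1..m}")
      case False
      then show ?thesis using H m by (auto simp: egorov_def)
    next
      case True
      then have i: "i \<in> {1..m}" and j: "j \<in> {1..m}" by auto
      have sj: "sg m j \<in> {1..m}" using sg_range[OF m j] .
      have "(\<Sum>l=1..m. H i l * egorov m g p l (sg m j)) = (if i = sg m j then 1 else 0)"
        using H i sj by blast
      moreover have "(\<Sum>l=1..m. H i l * egorov m g p l (sg m j)) = H i (sg m (sg m j)) * cg m g p (sg m j)"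
        by (rule sum_left[OF m sj])
      ultimately have e: "H i (sg m (sg m j)) * cg m g p (sg m j) = (if i = sg m j then 1 else 0)" by simp
      have ss: "sg m (sg m j) = j" using j m by (auto simp: sg_def)
      have cnz: "cg m g p (sg m j) \<noteq> 0" using pos by (simp add: cg_def)
      have Hij: "H i j = (if i = sg m j then 1 else 0) / cg m g p (sg m j)"
        using e cnz unfolding ss by (simp add: eq_divide_eq)
      have iff: "(i = sg m j) = (j = sg m i)" using i j m by (auto simp: sg_def)
      have cc: "cg m g p (sg m j) = cg m g p j" using j m by (auto simp: sg_def cg_def)
      have cc2: "j = sg m i \<Longrightarrow> cg m g p j = cg m g p i" using i m by (auto simp: sg_def cg_def)
      show ?thesis
        unfolding Hij egorov_eq[OF m] iff cc using i cc2
        by (auto simp: cg_def)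
    qed
  qed
qed

lemma partial_egorov:
  assumes d: "\<forall>x. g differentiable at x"
  shows "partial l (\<lambda>q. egorov m g q j i) p =
    (if l = m \<and> j \<in> {1..m-2} \<and> i = j then deriv g (p m) else 0)"
proof (cases "l = m \<and> j \<in> {1..m-2} \<and> i = j")
  case True
  have d1: "(g has_real_derivative deriv g (p m)) (at (p m + 0))"
    using d by (simp add: DERIV_deriv_iff_real_differentiable)
  have d2: "((\<lambda>t. p m + t) has_real_derivative 1) (at 0)"
    by (auto intro!: derivative_eq_intros)
  have "((\<lambda>t. g (p m + t)) has_real_derivative deriv g (p m) * 1) (at 0)"
    by (rule DERIV_chain2[OF d1 d2])
  then have "deriv (\<lambda>t. g (p m + t)) 0 = deriv g (p m)"
    by (simp add: DERIV_imp_deriv)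
  then show ?thesis using True unfolding partial_def egorov_def by simp
next
  case False
  have "partial l (\<lambda>q. egorov m g q j i) p = deriv (\<lambda>t. egorov m g p j i) 0"
  proof (cases "l = m")
    case True
    then have "\<not> (j \<in> {1..m-2} \<and> i = j)" using False by auto
    then have "\<And>t. egorov m g (p(l := p l + t)) j i = egorov m g p j i"
      unfolding egorov_def by auto
    then show ?thesis unfolding partial_def by simp
  next
    case False
    then have "\<And>t. egorov m g (p(l := p l + t)) j i = egorov m g p j i"
      unfolding egorov_def by auto
    then show ?thesis unfolding partial_def by simp
  qed
  also have "\<dots> = 0" by (rule DERIV_imp_deriv) (rule DERIV_const)
  finally show ?thesis using False by auto
qed

lemma christ:
  assumes m: "m \<ge> 3" and pos: "g (p m) \<noteq> 0" and d: "\<forall>x. g differentiable at x"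
    and k: "k \<in> {1..m}" and i: "i \<in> {1..m}"
  shows "christoffel m (egorov m g) k i (sg m i) p =
    (if i \<le> m - 2 \<and> k = m - 1 then - deriv g (p m) / 2 else 0)"
proof -
  let ?T = "\<lambda>l. partial i (\<lambda>q. egorov m g q (sg m i) l) p + partial (sg m i) (\<lambda>q. egorov m g q i l) p
        - partial l (\<lambda>q. egorov m g q i (sg m i)) p"
  have "christoffel m (egorov m g) k i (sg m i) p =
     (1/2) * (\<Sum>l=1..m. egorov m (\<lambda>_. 1 / g (p m)) p k l * ?T l)"
    unfolding christoffel_def metric_inv_egorov[of m g p, OF m pos] by simp
  also have "\<dots> = (1/2) * (cg m (\<lambda>_. 1 / g (p m)) p k * ?T (sg m k))"
    using sum_right[OF m k, of "\<lambda>_. 1 / g (p m)" p ?T] by simp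
  also have "\<dots> = (if i \<le> m - 2 \<and> k = m - 1 then - deriv g (p m) / 2 else 0)"
    unfolding partial_egorov[OF d]
    using idx_cases[OF i m] idx_cases[OF k m] m
    by (elim disjE) (auto simp: sg_def cg_def)
  finally show ?thesis .
qed

lemma Ssum:
  assumes m: "m \<ge> 3" and f: "f (p m) > 0" and fh: "fhat (p m) > 0"
    and df: "\<forall>x. f differentiable at x" and dfh: "\<forall>x. fhat differentiable at x"
    and k: "k \<in> {1..m}"
  shows "(\<Sum>i=1..m. \<Sum>j=1..m. metric_inv m (egorov m f) p i j *
            (christoffel m (egorov m fhat) k i j p - christoffel m (egorov m f) k i j p))
    = real (m - 2) * ((1 / f (p m)) * (if k = m - 1 then - (deriv fhat (p m) - deriv f (p m)) / 2 else 0))"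
proof -
  have fnz: "f (p m) \<noteq> 0" and fhnz: "fhat (p m) \<noteq> 0" using f fh by auto
  let ?c = "(1 / f (p m)) * (if k = m - 1 then - (deriv fhat (p m) - deriv f (p m)) / 2 else 0)"
  have "(\<Sum>i=1..m. \<Sum>j=1..m. metric_inv m (egorov m f) p i j *
            (christoffel m (egorov m fhat) k i j p - christoffel m (egorov m f) k i j p))
     = (\<Sum>i=1..m. if i \<le> m - 2 then ?c else 0)"
  proof (rule sum.cong)
    fix i assume i: "i \<in> {1..m}"
    have "(\<Sum>j=1..m. metric_inv m (egorov m f) p i j *
            (christoffel m (egorov m fhat) k i j p - christoffel m (egorov m f) k i j p))
       = (\<Sum>j=1..m. egorov m (\<lambda>_. 1 / f (p m)) p i j *
            (\<lambda>j. christoffel m (egorov m fhat) k i j p - christoffel m (egorov m f) k i j p) j)"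
      unfolding metric_inv_egorov[of m f p, OF m fnz] by simp
    also have "\<dots> = cg m (\<lambda>_. 1 / f (p m)) p i *
            (christoffel m (egorov m fhat) k i (sg m i) p - christoffel m (egorov m f) k i (sg m i) p)"
      by (rule sum_right[OF m i])
    also have "\<dots> = (if i \<le> m - 2 then ?c else 0)"
      unfolding christ[of m fhat p, OF m fhnz dfh k i] christ[of m f p, OF m fnz df k i]
      by (auto simp: cg_def)
    finally show "(\<Sum>j=1..m. metric_inv m (egorov m f) p i j *
            (christoffel m (egorov m fhat) k i j p - christoffel m (egorov m f) k i j p))
       = (if i \<le> m - 2 then ?c else 0)" .
  qed simp
  also have "\<dots> = (\<Sum>i\<in>{x\<in>{1..m}. x \<le> m - 2}. ?c)"
    by (rule sum.inter_filter[symmetric]) simp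
  also have "{x\<in>{1..m}. x \<le> m - 2} = {1..m-2}" by auto
  also have "(\<Sum>i\<in>{1..m-2}. ?c) = real (m - 2) * ?c" by simp
  finally show ?thesis .
qed

theorem theorem4p1:
  fixes m :: nat and f fhat :: "real \<Rightarrow> real"
  assumes "m \<ge> 3"
    and "\<forall>x. f x > 0" and "smooth_fun f"
    and "\<forall>x. fhat x > 0" and "smooth_fun fhat"
  shows "harmonic_metric m (egorov m f) (egorov m fhat) \<longleftrightarrow> deriv fhat = deriv f"
proof -
  have m: "m \<ge> 3" and fp: "\<forall>x. f x > 0" and fhp: "\<forall>x. fhat x > 0" using assms by auto
  have df: "\<forall>x. f differentiable at x"
    using assms(3) unfolding smooth_fun_def by (metis funpow_0)
  have dfh: "\<forall>x. fhat differentiable at x"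
    using assms(5) unfolding smooth_fun_def by (metis funpow_0)
  have H: "harmonic_metric m (egorov m f) (egorov m fhat) \<longleftrightarrow>
    (\<forall>p\<in>coords m. \<forall>k\<in>{1..m}. real (m - 2) * ((1 / f (p m)) *
       (if k = m - 1 then - (deriv fhat (p m) - deriv f (p m)) / 2 else 0)) = 0)"
    unfolding harmonic_metric_def
    using Ssum[OF m _ _ df dfh] fp fhp by simp
  show ?thesis
  proof
    assume h: "harmonic_metric m (egorov m f) (egorov m fhat)"
    show "deriv fhat = deriv f"
    proof
      fix x
      define p :: "nat \<Rightarrow> real" where "p = (\<lambda>i. if i = m then x else 0)"
      have pc: "p \<in> coords m" using m unfolding p_def coords_def by auto
      have pm: "p m = x" unfolding p_def by simp
      have k: "m - 1 \<in> {1..m}" using m by auto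
      have "real (m - 2) * ((1 / f x) * (- (deriv fhat x - deriv f x) / 2)) = 0"
        using h[unfolded H] pc k pm by fastforce
      moreover have "real (m - 2) \<noteq> 0" using m by simp
      moreover have "f x \<noteq> 0" using fp by (metis less_irrefl)
      ultimately show "deriv fhat x = deriv f x" by simp
    qed
  next
    assume "deriv fhat = deriv f"
    then show "harmonic_metric m (egorov m f) (egorov m fhat)" unfolding H by simp
  qed
qed

end
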